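(* Let $p,q>0$, $x\ge0$, $0\le y\le1$. Then both $y_k=B_{p,k}(x,y)$ and $y_k=\bar B_{p,k}(x,y)$ satisfy the four-term recurrence $$d_3y_{q+3}+d_2y_{q+2}+d_1y_{q+1}+d_0y_q=0,$$ where $$d_0=-(p+q)(1-y)^2,\quad d_1=(1-y)\left((p+q)(1-y)+p+2q+2+\tfrac12xy\right),$$ $$d_2=-(1-y)\left(p+2q+2+\tfrac12xy\right)-q-2,\quad d_3=q+2 .$$
   Context: For $p,q>0$ and $0\le y\le 1$, $I_y(p,q)=\frac{1}{B(p,q)}\int_0^y t^{p-1}(1-t)^{q-1}\,dt$ is the regularized incomplete beta function, with $B(p,q)=\Gamma(p)\Gamma(q)/\Gamma(p+q)$. The cumulative noncentral beta distribution is $B_{p,q}(x,y)=e^{-x/2}\sum_{j=0}^\infty \frac{1}{j!}\left(\frac x2\right)^j I_y(p+j,q)$ for $x\ge0$, and its complement is $\bar B_{p,q}(x,y)=1-B_{p,q}(x,y)$. *)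

theory Defs
  imports "HOL-Analysis.Analysis"
begin

definition inc_beta :: "real \<Rightarrow> real \<Rightarrow> real \<Rightarrow> real" where
  "inc_beta y p q = integral {0..y} (\<lambda>t. t powr (p - 1) * (1 - t) powr (q - 1)) / Beta p q"

definition nc_beta :: "real \<Rightarrow> real \<Rightarrow> real \<Rightarrow> real \<Rightarrow> real" where
  "nc_beta p q x y = exp (- x / 2) * (\<Sum>j. (x / 2) ^ j / fact j * inc_beta y (p + real j) q)"

definition nc_beta_c :: "real \<Rightarrow> real \<Rightarrow> real \<Rightarrow> real \<Rightarrow> real" where
  "nc_beta_c p q x y = 1 - nc_beta p q x y"

end

theory Submission
  imports Defs
begin

lemma Gamma_plus1_real: "(z::real) > 0 \<Longrightarrow> Gamma (z + 1) = z * Gamma z"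
  by (rule Gamma_plus1) (auto simp: nonpos_Ints_def)

lemma inc_beta_step:
  fixes a b y :: real
  assumes a: "a > 0" and b: "b > 0" and y0: "0 \<le> y" and y1: "y \<le> 1"
  shows "inc_beta y a (b + 1) - inc_beta y a b
         = Gamma (a + b) / (Gamma a * Gamma (b + 1)) * (y powr a * (1 - y) powr b)"
proof -
  define f where "f = (\<lambda>c t::real. t powr (a - 1) * (1 - t) powr (c - 1))"
  define C where "C = Gamma (a + b) / (Gamma a * Gamma (b + 1))"
  define F where "F = (\<lambda>y. integral {0..y} (f (b+1)) / Beta a (b + 1)
       - integral {0..y} (f b) / Beta a b - C * (y powr a * (1 - y) powr b))"
  have int1: "f (b+1) integrable_on {0..1}" unfolding f_def using a b by (intro integrable_Beta') auto
  have int2: "f b integrable_on {0..1}" unfolding f_def using a b by (intro integrable_Beta') auto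
  have cont: "continuous_on {0..1} F"
  proof -
    have bp: "Beta a (b+1) > 0" "Beta a b > 0" using a b by (auto simp: Beta_def)
    have c1: "continuous_on {0..1} (\<lambda>y::real. y powr a)"
      by (rule continuous_on_powr') (use a in \<open>auto intro: continuous_intros\<close>)
    have c2: "continuous_on {0..1} (\<lambda>y::real. (1 - y) powr b)"
      by (rule continuous_on_powr') (use b in \<open>auto intro: continuous_intros\<close>)
    show ?thesis
      unfolding F_def by (intro continuous_intros indefinite_integral_continuous_1 int1 int2 c1 c2) (use bp in auto)
  qed
  have der: "DERIV F t :> 0" if t: "0 < t" "t < 1" for t
  proof -
    have ct: "continuous (at t within {0..1}) (f c)" for c
    proof -
      have "continuous (at t) (f c)" unfolding f_def using t by (intro continuous_intros) auto
      thus ?thesis by (rule continuous_at_imp_continuous_at_within)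
    qed
    have d1: "((\<lambda>u. integral {0..u} (f c)) has_real_derivative f c t) (at t)"
      if "f c integrable_on {0..1}" for c
    proof -
      have "((\<lambda>u. integral {0..u} (f c)) has_vector_derivative f c t) (at t within ({0..1} - {}))"
        by (rule integral_has_vector_derivative_continuous_at) (use that t ct in auto)
      thus ?thesis using t by (simp add: has_real_derivative_iff_has_vector_derivative at_within_Icc_at)
    qed
    have dp: "((\<lambda>u. u powr a * (1 - u) powr b) has_real_derivative
        (a * t powr (a - 1) * (1 - t) powr b - b * t powr a * (1 - t) powr (b - 1))) (at t)"
      using t by (auto intro!: derivative_eq_intros)
    have "DERIV F t :> f (b+1) t / Beta a (b + 1) - f b t / Beta a b
        - C * (a * t powr (a - 1) * (1 - t) powr b - b * t powr a * (1 - t) powr (b - 1))"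
      unfolding F_def by (intro DERIV_diff DERIV_cdivide DERIV_cmult d1 int1 int2 dp)
    moreover have "f (b+1) t / Beta a (b + 1) - f b t / Beta a b
        - C * (a * t powr (a - 1) * (1 - t) powr b - b * t powr a * (1 - t) powr (b - 1)) = 0"
    proof -
      define P where "P = t powr (a - 1)"
      define Q where "Q = (1 - t) powr (b - 1)"
      have e1: "t powr a = P * t" unfolding P_def using t powr_add[of t "a-1" 1] by simp
      have e2: "(1 - t) powr b = Q * (1 - t)" unfolding Q_def using t powr_add[of "1-t" "b-1" 1] by simp
      have e3: "(1 - t) powr (b + 1 - 1) = Q * (1 - t)" using e2 by simp
      have gb: "Gamma (b + 1) = b * Gamma b" using b by (rule Gamma_plus1_real)
      have gab: "Gamma (a + (b + 1)) = (a + b) * Gamma (a + b)"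
        using Gamma_plus1_real[of "a+b"] a b by (simp add: add.assoc)
      have pos: "Gamma a > 0" "Gamma b > 0" "Gamma (a+b) > 0" using a b by auto
      show ?thesis unfolding f_def C_def Beta_def e1 e2 e3 gb gab
        using pos a b unfolding P_def[symmetric] Q_def[symmetric]
        by (simp add: field_simps) (simp add: divide_simps ring_distribs)
    qed
    ultimately show ?thesis by simp
  qed
  have "F y = F 0" by (rule DERIV_isconst2[of 0 1]) (use cont der y0 y1 in auto)
  also have "F 0 = 0" unfolding F_def by simp
  finally show ?thesis unfolding F_def inc_beta_def f_def C_def by (simp add: diff_divide_distrib)
qed

lemma inc_beta_bound:
  fixes a b y :: real
  assumes a: "a > 0" and b: "b > 0" and y0: "0 \<le> y" and y1: "y \<le> 1"
  shows "\<bar>inc_beta y a b\<bar> \<le> 1"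
proof -
  define f where "f = (\<lambda>t::real. t powr (a - 1) * (1 - t) powr (b - 1))"
  have i1: "f integrable_on {0..1}" unfolding f_def using a b by (intro integrable_Beta') auto
  have i2: "f integrable_on {0..y}" by (rule integrable_on_subinterval[OF i1]) (use y1 in auto)
  have nn: "\<forall>t\<in>{0..1}. 0 \<le> f t" unfolding f_def by auto
  have "integral {0..y} f \<le> integral {0..1} f"
    by (rule integral_subset_le) (use y1 i1 i2 nn in auto)
  also have "integral {0..1} f = Beta a b" unfolding f_def using has_integral_Beta_real[OF a b]
    by (simp add: integral_unique)
  finally have le: "integral {0..y} f \<le> Beta a b" .
  have ge: "0 \<le> integral {0..y} f" by (rule integral_nonneg) (use i2 nn y1 in auto)
  have bp: "Beta a b > 0" using a b by (auto simp: Beta_def)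
  show ?thesis unfolding inc_beta_def f_def[symmetric] using le ge bp by auto
qed

definition TT :: "real \<Rightarrow> real \<Rightarrow> real \<Rightarrow> real \<Rightarrow> nat \<Rightarrow> real" where
  "TT p b x y j = (x/2)^j / fact j * (Gamma (p + real j + b) / (Gamma (p + real j) * Gamma (b + 1))
      * (y powr (p + real j) * (1 - y) powr b))"

lemma nc_step:
  fixes p b x y :: real
  assumes p: "p > 0" and b: "b > 0" and x: "x \<ge> 0" and y0: "0 \<le> y" and y1: "y \<le> 1"
  shows "summable (TT p b x y) \<and> nc_beta p (b + 1) x y - nc_beta p b x y = exp (- x / 2) * suminf (TT p b x y)"
proof -
  define u where "u = (\<lambda>c j. (x / 2) ^ j / fact j * inc_beta y (p + real j) c)"
  have su: "summable (u c)" if c: "c > 0" for c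
  proof (rule summable_comparison_test'[OF summable_exp[of "x/2"]])
    fix n :: nat
    have "\<bar>inc_beta y (p + real n) c\<bar> \<le> 1" by (rule inc_beta_bound) (use p c y0 y1 in auto)
    moreover have "0 \<le> (x / 2) ^ n / fact n" using x by simp
    ultimately have "\<bar>(x / 2) ^ n / fact n * inc_beta y (p + real n) c\<bar> \<le> (x / 2) ^ n / fact n"
      unfolding abs_mult by (metis abs_of_nonneg mult_left_le)
    thus "norm (u c n) \<le> inverse (fact n) * (x / 2) ^ n" unfolding u_def by (simp add: field_simps)
  qed
  have eq: "u (b + 1) j - u b j = TT p b x y j" for j
  proof -
    have "inc_beta y (p + real j) (b + 1) - inc_beta y (p + real j) b =
      Gamma (p + real j + b) / (Gamma (p + real j) * Gamma (b + 1)) * (y powr (p + real j) * (1 - y) powr b)"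
      by (rule inc_beta_step) (use p b y0 y1 in auto)
    hence "(x / 2) ^ j / fact j * inc_beta y (p + real j) (b + 1) - (x / 2) ^ j / fact j * inc_beta y (p + real j) b
      = (x / 2) ^ j / fact j * (Gamma (p + real j + b) / (Gamma (p + real j) * Gamma (b + 1)) * (y powr (p + real j) * (1 - y) powr b))"
      by (metis right_diff_distrib)
    thus ?thesis unfolding u_def TT_def .
  qed
  have "suminf (u (b+1)) - suminf (u b) = (\<Sum>j. u (b+1) j - u b j)"
    by (rule suminf_diff) (use su b in auto)
  moreover have "summable (\<lambda>j. u (b+1) j - u b j)" by (intro summable_diff su) (use b in auto)
  moreover have "nc_beta p (b + 1) x y - nc_beta p b x y = exp (- x / 2) * (suminf (u (b+1)) - suminf (u b))"
    unfolding nc_beta_def u_def by (simp add: right_diff_distrib)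
  ultimately show ?thesis unfolding eq by simp
qed


lemma term_id:
  fixes p q x y :: real and k :: nat
  assumes p: "p > 0" and q: "q > 0" and y0: "0 \<le> y" and y1: "y \<le> 1"
  defines "A \<equiv> \<lambda>j. (q + 2) * TT p (q + 2) x y j - (1 - y) * (p + 2 * q + 2) * TT p (q + 1) x y j
                 + (p + q) * (1 - y)^2 * TT p q x y j"
  shows "A 0 = 0" and "A (Suc k) = (1 - y) * (x * y / 2) * TT p (q + 1) x y k"
proof -
  have gp: "\<And>z::real. z > 0 \<Longrightarrow> Gamma (z + 1) = z * Gamma z" by (rule Gamma_plus1_real)
  define W where "W = (1 - y) powr q"
  have w1: "(1 - y) powr (q + 1) = W * (1 - y)" unfolding W_def using y1 powr_add[of "1-y" q 1] by simp
  have w2: "(1 - y) powr (q + 2) = W * (1 - y)^2" unfolding W_def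
    using y1 powr_add[of "1-y" q 2] by (simp add: power2_eq_square powr_realpow)
  have q1: "Gamma (q + 1 + 1) = (q + 1) * Gamma (q + 1)" using q gp[of "q+1"] by simp
  have q2: "Gamma (q + 2 + 1) = (q + 2) * ((q + 1) * Gamma (q + 1))"
    using q gp[of "q+2"] q1 by (simp add: add.assoc)
  have gq: "Gamma (q + 1) > 0" using q by simp
  show "A 0 = 0"
  proof -
    define G where "G = Gamma (p + q)"
    have g1: "Gamma (p + q + 1) = (p + q) * G" unfolding G_def using p q gp[of "p+q"] by simp
    have g2: "Gamma (p + (q + 1)) = (p + q) * G" using g1 by (simp add: add.assoc)
    have g3: "Gamma (p + (q + 2)) = (p + q + 1) * ((p + q) * G)"
      using gp[of "p+q+1"] g1 p q by (simp add: add.assoc)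
    define Gq where "Gq = Gamma (q + 1)"
    define Gp where "Gp = Gamma p"
    have "Gq > 0" "Gp > 0" using gq p unfolding Gq_def Gp_def by auto
    then show ?thesis unfolding A_def TT_def of_nat_0 add_0_right g2 g3 w1 w2 q1 q2 G_def[symmetric] W_def[symmetric]
      Gq_def[symmetric] Gp_def[symmetric]
      using p q by (simp add: divide_simps) (simp add: algebra_simps power2_eq_square)
  qed
  show "A (Suc k) = (1 - y) * (x * y / 2) * TT p (q + 1) x y k"
  proof -
    define a where "a = p + real k"
    have a: "a > 0" using p unfolding a_def by simp
    define G where "G = Gamma (a + q)"
    define Y where "Y = y powr a"
    have ya: "y powr (p + real (Suc k)) = Y * y" unfolding Y_def a_def
      using y0 powr_add[of y "p + real k" 1] by (simp add: ac_simps)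
    have h1: "Gamma (p + real (Suc k) + q) = (a + q) * G"
      unfolding G_def a_def using gp[of "p + real k + q"] p q by (simp add: algebra_simps)
    have h2: "Gamma (p + real (Suc k) + (q + 1)) = (a + q + 1) * ((a + q) * G)"
      unfolding G_def a_def using gp[of "p + real k + q + 1"] gp[of "p + real k + q"] p q
      by (simp add: algebra_simps)
    have h3: "Gamma (p + real (Suc k) + (q + 2)) = (a + q + 2) * ((a + q + 1) * ((a + q) * G))"
      unfolding G_def a_def using gp[of "p + real k + q + 2"] gp[of "p + real k + q + 1"] gp[of "p + real k + q"] p q
      by (simp add: algebra_simps)
    have h4: "Gamma (p + real k + (q + 1)) = (a + q) * G"
      unfolding G_def a_def using gp[of "p + real k + q"] p q by (simp add: algebra_simps)
    have h4': "Gamma (a + (q + 1)) = (a + q) * G" using h4 unfolding a_def .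
    have h5: "Gamma (p + real (Suc k)) = a * Gamma a"
      unfolding a_def using gp[of "p + real k"] p by (simp add: algebra_simps)
    have ga: "Gamma a > 0" using a by simp
    have e: "p + real k = a" unfolding a_def ..
    define Gq where "Gq = Gamma (q + 1)"
    define Ga where "Ga = Gamma a"
    have pe: "p = a - real k" unfolding a_def by simp
    have "Gq > 0" "Ga > 0" using gq ga unfolding Gq_def Ga_def by auto
    then show ?thesis unfolding A_def TT_def ya h1 h2 h3 h4 h4' h5 w1 w2 q1 q2 e Y_def[symmetric] G_def[symmetric]
      Gq_def[symmetric] Ga_def[symmetric] W_def[symmetric]
      unfolding fact_Suc of_nat_Suc power_Suc
      using a q by (simp add: divide_simps) (simp add: pe algebra_simps power2_eq_square)
  qed
qed


theorem mainTheorem8: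
  fixes p q x y :: real
  assumes "p > 0" and "q > 0" and "x \<ge> 0" and "0 \<le> y" and "y \<le> 1"
  defines "d0 \<equiv> - (p + q) * (1 - y)^2"
      and "d1 \<equiv> (1 - y) * ((p + q) * (1 - y) + p + 2 * q + 2 + x * y / 2)"
      and "d2 \<equiv> - (1 - y) * (p + 2 * q + 2 + x * y / 2) - q - 2"
      and "d3 \<equiv> q + 2"
  shows "d3 * nc_beta p (q + 3) x y + d2 * nc_beta p (q + 2) x y
           + d1 * nc_beta p (q + 1) x y + d0 * nc_beta p q x y = 0
         \<and> d3 * nc_beta_c p (q + 3) x y + d2 * nc_beta_c p (q + 2) x y
           + d1 * nc_beta_c p (q + 1) x y + d0 * nc_beta_c p q x y = 0"
proof -
  note a = assms(1-5)
  define E where "E = exp (- x / 2)"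
  define D0 where "D0 = suminf (TT p q x y)"
  define D1 where "D1 = suminf (TT p (q + 1) x y)"
  define D2 where "D2 = suminf (TT p (q + 2) x y)"
  have s0: "summable (TT p q x y)" and n1: "nc_beta p (q + 1) x y - nc_beta p q x y = E * D0"
    using nc_step[of p q x y] a unfolding E_def D0_def by auto
  have s1: "summable (TT p (q + 1) x y)" and n2: "nc_beta p (q + 2) x y - nc_beta p (q + 1) x y = E * D1"
    using nc_step[of p "q + 1" x y] a unfolding E_def D1_def by (auto simp: add.assoc)
  have s2: "summable (TT p (q + 2) x y)" and n3: "nc_beta p (q + 3) x y - nc_beta p (q + 2) x y = E * D2"
    using nc_step[of p "q + 2" x y] a unfolding E_def D2_def by (auto simp: add.assoc)
  define A where "A \<equiv> \<lambda>j. (q + 2) * TT p (q + 2) x y j - (1 - y) * (p + 2 * q + 2) * TT p (q + 1) x y j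
                 + (p + q) * (1 - y)^2 * TT p q x y j"
  have A0: "A 0 = 0" and AS: "\<And>k. A (Suc k) = (1 - y) * (x * y / 2) * TT p (q + 1) x y k"
    unfolding A_def using term_id a by auto
  have "A sums ((q + 2) * D2 - (1 - y) * (p + 2 * q + 2) * D1 + (p + q) * (1 - y)^2 * D0)"
    unfolding A_def D0_def D1_def D2_def
    by (intro sums_add sums_diff sums_mult summable_sums s0 s1 s2)
  moreover have "(\<lambda>k. A (Suc k)) sums ((1 - y) * (x * y / 2) * D1)"
    unfolding AS D1_def by (intro sums_mult summable_sums s1)
  hence "A sums ((1 - y) * (x * y / 2) * D1)" using A0 by (simp add: sums_Suc_iff)
  ultimately have key: "(q + 2) * D2 - (1 - y) * (p + 2 * q + 2) * D1 + (p + q) * (1 - y)^2 * D0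
      = (1 - y) * (x * y / 2) * D1" by (rule sums_unique2)
  have D2e: "D2 = ((1 - y) * (x * y / 2) * D1 + (1 - y) * (p + 2 * q + 2) * D1 - (p + q) * (1 - y)^2 * D0) / (q + 2)"
    using key a by (simp add: field_simps)
  define N0 where "N0 = nc_beta p q x y"
  have N1: "nc_beta p (q + 1) x y = N0 + E * D0" using n1 unfolding N0_def by simp
  have N2: "nc_beta p (q + 2) x y = N0 + E * D0 + E * D1" using n2 N1 by simp
  have N3: "nc_beta p (q + 3) x y = N0 + E * D0 + E * D1 + E * D2" using n3 N2 by simp
  have g1: "d3 * nc_beta p (q + 3) x y + d2 * nc_beta p (q + 2) x y
           + d1 * nc_beta p (q + 1) x y + d0 * nc_beta p q x y = 0"
    unfolding N1 N2 N3 N0_def[symmetric] D2e d0_def d1_def d2_def d3_def using a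
    by (simp add: field_simps) (simp add: algebra_simps power2_eq_square)
  have sd: "d0 + d1 + d2 + d3 = 0" unfolding d0_def d1_def d2_def d3_def
    by (simp add: field_simps power2_eq_square)
  have g2: "d3 * nc_beta_c p (q + 3) x y + d2 * nc_beta_c p (q + 2) x y
           + d1 * nc_beta_c p (q + 1) x y + d0 * nc_beta_c p q x y = 0"
  proof -
    have "d3 * nc_beta_c p (q + 3) x y + d2 * nc_beta_c p (q + 2) x y
           + d1 * nc_beta_c p (q + 1) x y + d0 * nc_beta_c p q x y
        = (d0 + d1 + d2 + d3) - (d3 * nc_beta p (q + 3) x y + d2 * nc_beta p (q + 2) x y
           + d1 * nc_beta p (q + 1) x y + d0 * nc_beta p q x y)"
      unfolding nc_beta_c_def by (simp add: algebra_simps)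
    thus ?thesis using g1 sd by simp
  qed
  show ?thesis using g1 g2 by blast
qed

end
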